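(* Let $p$ be an odd prime, let $h_1,h_2$ be relatively prime positive integers, both different from $1$, and set $h=h_1+h_2$. Let $\mathcal{D}:\overline{\mathfrak m}^2\to\overline{\mathfrak m}^2$ be given by $\mathcal{D}(x_1,x_2)=(px_1+x_2^{p^{h_1}},\ px_2+x_1^{p^{h_2}})$. Let $n\ge1$ and let $(\xi,\eta)$ be a non-trivial $p^n$-torsion point of $\mathcal D$, i.e. $\mathcal{D}^{\circ n}(\xi,\eta)=(0,0)$ but $\mathcal{D}^{\circ(n-1)}(\xi,\eta)\ne(0,0)$. Then: if $n=2m$ is even, $v(\xi)=\dfrac{p^{h_2}+1}{p^{hm-h_1}(p^h-1)}$ and $v(\eta)=\dfrac{p^{h_1}+1}{p^{hm-h_2}(p^h-1)}$; if $n=2m+1$ is odd, $v(\xi)=\dfrac{p^{h_1}+1}{p^{hm}(p^h-1)}$ and $v(\eta)=\dfrac{p^{h_2}+1}{p^{hm}(p^h-1)}$.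
   Context: $v$ denotes the $p$-adic valuation on $\overline{\mathbb{Q}}_p$ normalized by $v(p)=1$, and $\overline{\mathfrak m}$ the maximal ideal of the ring of integers of $\overline{\mathbb{Q}}_p$; $\mathcal D^{\circ k}$ is the $k$-fold iterate ($\mathcal{D}^{\circ 0}=\mathrm{Id}$). The map $\mathcal D$ is a simple approximation of the multiplication-by-$p$ endomorphism of the 2-dimensional Lubin–Tate formal group associated with $(h_1,h_2)$. *)

theory Defs
  imports Complex_Main "HOL-Library.Extended_Real" "HOL-Computational_Algebra.Polynomial"
begin

definition is_valuation :: "('a::field \<Rightarrow> ereal) \<Rightarrow> bool" where
  "is_valuation v \<longleftrightarrow>
     (\<forall>x. v x = \<infinity> \<longleftrightarrow> x = 0) \<and> (\<forall>x. v x \<noteq> -\<infinity>) \<and>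
     (\<forall>x y. v (x * y) = v x + v y) \<and>
     (\<forall>x y. min (v x) (v y) \<le> v (x + y))"

definition alg_closed_field :: "'a::field itself \<Rightarrow> bool" where
  "alg_closed_field _ \<longleftrightarrow> (\<forall>q::'a poly. degree q > 0 \<longrightarrow> (\<exists>x. poly q x = 0))"

text \<open>The approximation D of multiplication by p on the 2-dim Lubin--Tate group.\<close>
definition LT_D :: "nat \<Rightarrow> nat \<Rightarrow> nat \<Rightarrow> 'a::field \<times> 'a \<Rightarrow> 'a \<times> 'a" where
  "LT_D p h1 h2 = (\<lambda>(x1, x2). (of_nat p * x1 + x2 ^ (p ^ h1), of_nat p * x2 + x1 ^ (p ^ h2)))"

end

theory Submission
  imports Defs
begin

lemma val_basic:
  fixes v :: "'a::field \<Rightarrow> ereal"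
  assumes "is_valuation v"
  shows val_zero: "v 0 = \<infinity>" and val_fin: "x \<noteq> 0 \<Longrightarrow> \<bar>v x\<bar> \<noteq> \<infinity>"
    and val_mult: "v (x * y) = v x + v y"
    and val_ultra: "min (v x) (v y) \<le> v (x + y)"
  using assms unfolding is_valuation_def by auto

lemma val_one:
  fixes v :: "'a::field \<Rightarrow> ereal"
  assumes "is_valuation v" shows "v 1 = 0"
proof -
  have f: "\<bar>v 1\<bar> \<noteq> \<infinity>" using val_fin[OF assms] by simp
  have "v 1 = v 1 + v 1" using val_mult[OF assms, of 1 1] by simp
  with f show ?thesis by (cases "v 1") auto
qed

lemma val_neg:
  fixes v :: "'a::field \<Rightarrow> ereal"
  assumes "is_valuation v" shows "v (- x) = v x"
proof -
  have f: "\<bar>v (-1)\<bar> \<noteq> \<infinity>" using val_fin[OF assms, of "-1"] by simp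
  have "v 1 = v (-1) + v (-1)" using val_mult[OF assms, of "-1" "-1"] by simp
  hence "v (-1) = 0" using f val_one[OF assms] by (cases "v (-1)") auto
  moreover have "v (-x) = v (-1) + v x" using val_mult[OF assms, of "-1" x] by simp
  ultimately show ?thesis by simp
qed

lemma val_pow:
  fixes v :: "'a::field \<Rightarrow> ereal"
  assumes "is_valuation v" shows "v (x ^ k) = ereal (real k) * v x"
proof (induction k)
  case 0 then show ?case using val_one[OF assms] by simp
next
  case (Suc k)
  have nm: "v x \<noteq> -\<infinity>" using assms unfolding is_valuation_def by auto
  have "v (x ^ Suc k) = v x + ereal (real k) * v x" using val_mult[OF assms, of x "x^k"] Suc by simp
  also have "\<dots> = ereal (real (Suc k)) * v x" using nm
    by (cases "v x") (auto simp: algebra_simps)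
  finally show ?case .
qed

lemma val_strict:
  fixes v :: "'a::field \<Rightarrow> ereal"
  assumes "is_valuation v" and "v u < v w" shows "v (u + w) = v u"
proof -
  have 1: "v u \<le> v (u + w)" using val_ultra[OF assms(1), of u w] assms(2) by simp
  have "min (v (u + w)) (v (-w)) \<le> v u" using val_ultra[OF assms(1), of "u+w" "-w"] by simp
  hence "min (v (u + w)) (v w) \<le> v u" using val_neg[OF assms(1)] by simp
  hence "v (u + w) \<le> v u" using assms(2) by (auto simp: min_def split: if_splits)
  with 1 show ?thesis by simp
qed

lemma val_pos_pow:
  fixes v :: "'a::field \<Rightarrow> ereal"
  assumes "is_valuation v" "v x > 0" "k > 0" shows "v (x ^ k) > 0"
  using assms(2,3) val_pow[OF assms(1)] by (cases "v x") auto

lemma D_pos: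
  fixes v :: "'a::field \<Rightarrow> ereal"
  assumes "is_valuation v" "v (of_nat p) = 1" "p > 0"
    and "v x > 0" "v y > 0"
  shows "v (fst (LT_D p h1 h2 (x, y))) > 0 \<and> v (snd (LT_D p h1 h2 (x, y))) > 0"
proof -
  have px: "v (of_nat p * x) > 0" using val_mult[OF assms(1)] assms(2,4)
    by (cases "v x") auto
  have py: "v (of_nat p * y) > 0" using val_mult[OF assms(1)] assms(2,5)
    by (cases "v y") auto
  have a: "v (y ^ (p ^ h1)) > 0" using val_pos_pow[OF assms(1) assms(5)] assms(3) by simp
  have b: "v (x ^ (p ^ h2)) > 0" using val_pos_pow[OF assms(1) assms(4)] assms(3) by simp
  have "0 < min (v (of_nat p * x)) (v (y ^ (p ^ h1)))" using px a by simp
  also have "\<dots> \<le> v (fst (LT_D p h1 h2 (x, y)))" using val_ultra[OF assms(1)] by (simp add: LT_D_def)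
  finally have 1: "v (fst (LT_D p h1 h2 (x, y))) > 0" .
  have "0 < min (v (of_nat p * y)) (v (x ^ (p ^ h2)))" using py b by simp
  also have "\<dots> \<le> v (snd (LT_D p h1 h2 (x, y)))" using val_ultra[OF assms(1)] by (simp add: LT_D_def)
  finally show ?thesis using 1 by simp
qed


lemma level1:
  fixes v :: "'a::field \<Rightarrow> ereal"
  assumes val: "is_valuation v" and vp: "v (of_nat p) = 1"
    and D: "LT_D p h1 h2 (\<alpha>, \<beta>) = (0, 0)" and nz: "(\<alpha>, \<beta>) \<noteq> (0, 0)"
    and q: "real (p ^ h1) * real (p ^ h2) > 1"
  shows "v \<alpha> = ereal ((real (p ^ h1) + 1) / (real (p ^ h1) * real (p ^ h2) - 1))
       \<and> v \<beta> = ereal ((real (p ^ h2) + 1) / (real (p ^ h1) * real (p ^ h2) - 1))"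
proof -
  define q1 where "q1 = p ^ h1"
  define q2 where "q2 = p ^ h2"
  have e1: "of_nat p * \<alpha> = - (\<beta> ^ q1)" and e2: "of_nat p * \<beta> = - (\<alpha> ^ q2)"
    using D unfolding LT_D_def q1_def q2_def by (auto simp: eq_neg_iff_add_eq_0)
  have a0: "\<alpha> \<noteq> 0"
  proof
    assume "\<alpha> = 0" with e1 have "\<beta> = 0" by simp
    with \<open>\<alpha> = 0\<close> nz show False by simp
  qed
  have b0: "\<beta> \<noteq> 0"
  proof
    assume "\<beta> = 0" with e2 have "\<alpha> = 0" by simp
    with a0 show False by simp
  qed
  obtain a where a: "v \<alpha> = ereal a" using val_fin[OF val a0] by (cases "v \<alpha>") auto
  obtain b where b: "v \<beta> = ereal b" using val_fin[OF val b0] by (cases "v \<beta>") auto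
  have "v (of_nat p * \<alpha>) = v (- (\<beta> ^ q1))" using e1 by simp
  hence r1: "1 + a = real q1 * b" using val_mult[OF val] val_neg[OF val] val_pow[OF val] vp a b by simp
  have "v (of_nat p * \<beta>) = v (- (\<alpha> ^ q2))" using e2 by simp
  hence r2: "1 + b = real q2 * a" using val_mult[OF val] val_neg[OF val] val_pow[OF val] vp a b by simp
  have qq: "real q1 * real q2 - 1 > 0" using q unfolding q1_def q2_def by simp
  have "a * (real q1 * real q2 - 1) = real q1 + 1"
  proof -
    have "real q1 * (real q2 * a) = real q1 + real q1 * b" using r2 by (metis distrib_left mult.right_neutral)
    thus ?thesis using r1 by (simp add: algebra_simps)
  qed
  hence ha: "a = (real q1 + 1) / (real q1 * real q2 - 1)" using qq by (simp add: field_simps)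
  have "b * (real q1 * real q2 - 1) = real q2 + 1"
  proof -
    have "real q2 * (real q1 * b) = real q2 + real q2 * a" using r1 by (metis distrib_left mult.right_neutral)
    thus ?thesis using r2 by (simp add: algebra_simps)
  qed
  hence hb: "b = (real q2 + 1) / (real q1 * real q2 - 1)" using qq by (simp add: field_simps)
  show ?thesis using a b ha hb unfolding q1_def q2_def by simp
qed

lemma step_val:
  fixes v :: "'a::field \<Rightarrow> ereal"
  assumes val: "is_valuation v" and vp: "v (of_nat p) = 1" and p: "p > 0"
    and x: "v x > 0" and y: "v y > 0"
    and D: "LT_D p h1 h2 (x, y) = (\<alpha>, \<beta>)"
    and A: "v \<alpha> = ereal A" "A < 1" and B: "v \<beta> = ereal B" "B < 1"
  shows "v x = ereal (B / real (p ^ h2)) \<and> v y = ereal (A / real (p ^ h1))"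
proof -
  define q1 where "q1 = p ^ h1"
  define q2 where "q2 = p ^ h2"
  have q1p: "q1 > 0" "q2 > 0" using p unfolding q1_def q2_def by auto
  have e1: "\<alpha> = x ^ q2 * 0 + y ^ q1 + of_nat p * x" and e2: "\<beta> = x ^ q2 + of_nat p * y"
    using D unfolding LT_D_def q1_def q2_def by (auto simp: algebra_simps)
  have "\<beta> = x ^ q2 + of_nat p * y" by (fact e2)
  have py: "v (of_nat p * y) > 1" using val_mult[OF val] vp y by (cases "v y") auto
  have lt: "v (x ^ q2) < v (of_nat p * y)"
  proof (rule ccontr)
    assume "\<not> ?thesis"
    hence "v (of_nat p * y) \<le> v \<beta>" using val_ultra[OF val, of "x ^ q2" "of_nat p * y"] e2
      by (simp add: min_def split: if_splits)
    moreover have "ereal B < 1" using B by simp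
    ultimately show False using py B by (metis less_le_trans order.asym)
  qed
  have "v \<beta> = v (x ^ q2)" using val_strict[OF val lt] e2 by simp
  hence bx: "ereal B = ereal (real q2) * v x" using val_pow[OF val] B by simp
  have "v x = ereal (B / real q2)" using bx x q1p by (cases "v x") (auto simp: field_simps)
  moreover
  have e1': "\<alpha> = y ^ q1 + of_nat p * x" using D unfolding LT_D_def q1_def q2_def by (auto simp: algebra_simps)
  have px: "v (of_nat p * x) > 1" using val_mult[OF val] vp x by (cases "v x") auto
  have lt2: "v (y ^ q1) < v (of_nat p * x)"
  proof (rule ccontr)
    assume "\<not> ?thesis"
    hence "v (of_nat p * x) \<le> v \<alpha>" using val_ultra[OF val, of "y ^ q1" "of_nat p * x"] e1'
      by (simp add: min_def split: if_splits)
    moreover have "ereal A < 1" using A by simp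
    ultimately show False using px A by (metis less_le_trans order.asym)
  qed
  have "v \<alpha> = v (y ^ q1)" using val_strict[OF val lt2] e1' by simp
  hence ay: "ereal A = ereal (real q1) * v y" using val_pow[OF val] A by simp
  have "v y = ereal (A / real q1)" using ay y q1p by (cases "v y") (auto simp: field_simps)
  ultimately show ?thesis unfolding q1_def q2_def by simp
qed


primrec seqab :: "real \<Rightarrow> real \<Rightarrow> real \<Rightarrow> real \<Rightarrow> nat \<Rightarrow> real \<times> real" where
  "seqab A B r1 r2 0 = (A, B)"
| "seqab A B r1 r2 (Suc j) = (snd (seqab A B r1 r2 j) / r2, fst (seqab A B r1 r2 j) / r1)"

lemma seqab_closed:
  assumes "r1 > 0" "r2 > 0"
  shows "seqab A B r1 r2 (2 * m) = (A / (r1 * r2) ^ m, B / (r1 * r2) ^ m)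
       \<and> seqab A B r1 r2 (Suc (2 * m)) = (B / ((r1 * r2) ^ m * r2), A / ((r1 * r2) ^ m * r1))"
proof (induction m)
  case 0 then show ?case by simp
next
  case (Suc m)
  have e: "2 * Suc m = Suc (Suc (2 * m))" by simp
  show ?case using Suc assms unfolding e by (simp add: field_simps)
qed

lemma seqab_bounds:
  assumes "0 < A" "A < 1" "0 < B" "B < 1" "r1 \<ge> 1" "r2 \<ge> 1"
  shows "0 < fst (seqab A B r1 r2 j) \<and> fst (seqab A B r1 r2 j) < 1
       \<and> 0 < snd (seqab A B r1 r2 j) \<and> snd (seqab A B r1 r2 j) < 1"
proof (induction j)
  case 0 then show ?case using assms by simp
next
  case (Suc j)
  then show ?case using assms by (auto simp: divide_less_eq)
qed

theorem theorem5p5: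
  fixes v :: "'a::field_char_0 \<Rightarrow> ereal"
    and p h1 h2 n :: nat and \<xi> \<eta> :: 'a
  assumes "alg_closed_field TYPE('a)"
    and "is_valuation v" and "v (of_nat p) = 1"
    and "prime p" and "odd p"
    and "h1 > 0" and "h2 > 0" and "h1 \<noteq> 1" and "h2 \<noteq> 1" and "coprime h1 h2"
    and "n \<ge> 1"
    and "v \<xi> > 0" and "v \<eta> > 0"
    and "(LT_D p h1 h2 ^^ n) (\<xi>, \<eta>) = (0, 0)"
    and "(LT_D p h1 h2 ^^ (n - 1)) (\<xi>, \<eta>) \<noteq> (0, 0)"
  shows "(\<forall>m. n = 2 * m \<longrightarrow>
            v \<xi> = ereal ((real p ^ h2 + 1) / (real p ^ ((h1 + h2) * m - h1) * (real p ^ (h1 + h2) - 1))) \<and>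
            v \<eta> = ereal ((real p ^ h1 + 1) / (real p ^ ((h1 + h2) * m - h2) * (real p ^ (h1 + h2) - 1))))
       \<and> (\<forall>m. n = 2 * m + 1 \<longrightarrow>
            v \<xi> = ereal ((real p ^ h1 + 1) / (real p ^ ((h1 + h2) * m) * (real p ^ (h1 + h2) - 1))) \<and>
            v \<eta> = ereal ((real p ^ h2 + 1) / (real p ^ ((h1 + h2) * m) * (real p ^ (h1 + h2) - 1))))"
proof -
  note val = assms(2) and vp = assms(3)
  define D where "D = (LT_D p h1 h2 :: 'a \<times> 'a \<Rightarrow> 'a \<times> 'a)"
  define P where "P k = (D ^^ k) (\<xi>, \<eta>)" for k
  have p2: "p \<ge> 2" using assms(4) prime_ge_2_nat by blast
  have p3: "p \<ge> 3" using p2 assms(5) by (cases "p = 2") auto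
  have p0: "p > 0" using p2 by simp
  define r1 where "r1 = real p ^ h1"
  define r2 where "r2 = real p ^ h2"
  have r1e: "real (p ^ h1) = r1" and r2e: "real (p ^ h2) = r2" unfolding r1_def r2_def by simp_all
  have rp: "real p \<ge> 3" using p3 by simp
  have r1g: "r1 \<ge> 3"
  proof -
    have "real p \<le> r1" unfolding r1_def using power_increasing[of 1 h1 "real p"] assms(6) rp
      by (simp only: power_one_right)
    thus ?thesis using rp by linarith
  qed
  have r2g: "r2 \<ge> 3"
  proof -
    have "real p \<le> r2" unfolding r2_def using power_increasing[of 1 h2 "real p"] assms(7) rp
      by (simp only: power_one_right)
    thus ?thesis using rp by linarith
  qed
  have q9: "r1 * r2 \<ge> 3 * 3" using mult_mono[OF r1g r2g] r1g by simp
  hence q: "r1 * r2 > 1" by simp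
  have q3: "r1 * r2 \<ge> 3 * r1" using r1g r2g by simp
  define A0 where "A0 = (r1 + 1) / (r1 * r2 - 1)"
  define B0 where "B0 = (r2 + 1) / (r1 * r2 - 1)"
  have den: "r1 * r2 - 1 > 0" using q by simp
  have lt1: "r1 + 1 < r1 * r2 - 1" using q3 r1g by linarith
  have A0: "0 < A0" "A0 < 1" unfolding A0_def using den lt1 r1g by (auto simp: divide_less_eq)
  have q3': "r1 * r2 \<ge> 3 * r2" using r1g r2g by simp
  have lt2: "r2 + 1 < r1 * r2 - 1" using q3' r2g by linarith
  have B0: "0 < B0" "B0 < 1" unfolding B0_def using den lt2 r2g by (auto simp: divide_less_eq)
  have pos: "v (fst (P k)) > 0 \<and> v (snd (P k)) > 0" for k
  proof (induction k)
    case 0 then show ?case using assms(12,13) unfolding P_def by simp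
  next
    case (Suc k)
    have "P (Suc k) = D (fst (P k), snd (P k))" unfolding P_def by simp
    then show ?case using D_pos[OF val vp p0, of "fst (P k)" "snd (P k)" h1 h2] Suc unfolding D_def
      by simp
  qed
  have main: "j < n \<Longrightarrow> v (fst (P (n - 1 - j))) = ereal (fst (seqab A0 B0 r1 r2 j))
                 \<and> v (snd (P (n - 1 - j))) = ereal (snd (seqab A0 B0 r1 r2 j))" for j
  proof (induction j)
    case 0
    have nn: "n = Suc (n - 1)" using assms(11) by simp
    have "D (fst (P (n - 1)), snd (P (n - 1))) = (0, 0)" using assms(14) unfolding P_def D_def
      by (subst (asm) nn) simp
    moreover have "(fst (P (n - 1)), snd (P (n - 1))) \<noteq> (0, 0)" using assms(15) unfolding P_def D_def by simp
    ultimately show ?case using level1[OF val vp, of h1 h2 "fst (P (n - 1))" "snd (P (n - 1))"] q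
      unfolding D_def r1e r2e A0_def B0_def by simp
  next
    case (Suc j)
    define k where "k = n - 1 - Suc j"
    have kk: "n - 1 - j = Suc k" using Suc.prems unfolding k_def by simp
    have IH: "v (fst (P (Suc k))) = ereal (fst (seqab A0 B0 r1 r2 j))"
       "v (snd (P (Suc k))) = ereal (snd (seqab A0 B0 r1 r2 j))" using Suc kk by auto
    have DP: "LT_D p h1 h2 (fst (P k), snd (P k)) = (fst (P (Suc k)), snd (P (Suc k)))"
      unfolding P_def D_def by simp
    have bnd: "fst (seqab A0 B0 r1 r2 j) < 1" "snd (seqab A0 B0 r1 r2 j) < 1"
      using seqab_bounds[OF A0 B0, of r1 r2 j] r1g r2g by auto
    show ?case using step_val[OF val vp p0 _ _ DP IH(1) bnd(1) IH(2) bnd(2)] pos[of k]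
      unfolding k_def[symmetric] r1e r2e by simp
  qed
  have P0: "P 0 = (\<xi>, \<eta>)" unfolding P_def by simp
  have r1p: "r1 > 0" "r2 > 0" using r1g r2g by auto
  have hp: "real p ^ (h1 + h2) - 1 = r1 * r2 - 1" unfolding r1_def r2_def by (simp add: power_add)
  show ?thesis
  proof (intro conjI allI impI)
    fix m assume nm: "n = 2 * m"
    then obtain m0 where m0: "m = Suc m0" using assms(11) by (cases m) auto
    have j: "n - 1 - (Suc (2 * m0)) = 0" "Suc (2 * m0) < n" using nm m0 by auto
    have M: "v \<xi> = ereal (B0 / ((r1 * r2) ^ m0 * r2)) \<and> v \<eta> = ereal (A0 / ((r1 * r2) ^ m0 * r1))"
      using main[OF j(2)] seqab_closed[OF r1p, of A0 B0 m0] unfolding j(1) P0 by simp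
    have e1: "(h1 + h2) * m - h1 = (h1 + h2) * m0 + h2" using m0 by simp
    have e2: "(h1 + h2) * m - h2 = (h1 + h2) * m0 + h1" using m0 by simp
    have x1: "real p ^ ((h1 + h2) * m - h1) = (r1 * r2) ^ m0 * r2"
      unfolding e1 r1_def r2_def by (simp add: power_add power_mult power_mult_distrib)
    have x2: "real p ^ ((h1 + h2) * m - h2) = (r1 * r2) ^ m0 * r1"
      unfolding e2 r1_def r2_def by (simp add: power_add power_mult power_mult_distrib)
    show "v \<xi> = ereal ((real p ^ h2 + 1) / (real p ^ ((h1 + h2) * m - h1) * (real p ^ (h1 + h2) - 1)))"
      using M unfolding x1 hp B0_def r2_def[symmetric] by simp
    show "v \<eta> = ereal ((real p ^ h1 + 1) / (real p ^ ((h1 + h2) * m - h2) * (real p ^ (h1 + h2) - 1)))"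
      using M unfolding x2 hp A0_def r1_def[symmetric] by simp
  next
    fix m assume nm: "n = 2 * m + 1"
    have j: "n - 1 - 2 * m = 0" "2 * m < n" using nm by auto
    have M: "v \<xi> = ereal (A0 / (r1 * r2) ^ m) \<and> v \<eta> = ereal (B0 / (r1 * r2) ^ m)"
      using main[OF j(2)] seqab_closed[OF r1p, of A0 B0 m] unfolding j(1) P0 by simp
    have x: "real p ^ ((h1 + h2) * m) = (r1 * r2) ^ m"
      unfolding r1_def r2_def by (simp add: power_add power_mult power_mult_distrib)
    show "v \<xi> = ereal ((real p ^ h1 + 1) / (real p ^ ((h1 + h2) * m) * (real p ^ (h1 + h2) - 1)))"
      using M unfolding x hp A0_def r1_def[symmetric] by simp
    show "v \<eta> = ereal ((real p ^ h2 + 1) / (real p ^ ((h1 + h2) * m) * (real p ^ (h1 + h2) - 1)))"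
      using M unfolding x hp B0_def r2_def[symmetric] by simp
  qed
qed

end
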